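(* Let $(S,\le)$ be a poset. The following are equivalent: (1) the $\mathbb{B}$-module $\mathbb{B}(S,\le)$ is projective; (2) the poset $\mathbb{B}(S,\le)$ (ordered by inclusion) is lower finite; (3) $(S,\le)$ is lower finite.
   Context: $\mathbb{B}=\{-\infty,0\}$ is the Boolean semifield; $\mathbb{B}$-modules are join-semilattices with least element, homomorphisms preserve finite joins; a module is projective if every surjection onto it has a section. $\mathbb{B}(S,\le)$ is the set of lower subsets of $S$ which are downward closures of finite subsets, under union (the free $\mathbb{B}$-module on the poset). A poset is lower finite if for every element $X$ the set of elements $\le X$ is finite. *)

theory Defs
  imports Main
begin

text \<open>A \<open>\<bool>\<close>-module: a join-semilattice with least element, given by a carrier set,
  a binary join operation and a least element (the join identity).\<close>
definition bmodule :: "'b set \<Rightarrow> ('b \<Rightarrow> 'b \<Rightarrow> 'b) \<Rightarrow> 'b \<Rightarrow> bool" where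
  "bmodule M j z \<longleftrightarrow>
     z \<in> M \<and> (\<forall>x\<in>M. \<forall>y\<in>M. j x y \<in> M) \<and>
     (\<forall>x\<in>M. \<forall>y\<in>M. \<forall>w\<in>M. j (j x y) w = j x (j y w)) \<and>
     (\<forall>x\<in>M. \<forall>y\<in>M. j x y = j y x) \<and>
     (\<forall>x\<in>M. j x x = x) \<and>
     (\<forall>x\<in>M. j z x = x)"

definition bhom :: "'b set \<Rightarrow> ('b \<Rightarrow> 'b \<Rightarrow> 'b) \<Rightarrow> 'b \<Rightarrow> 'c set \<Rightarrow> ('c \<Rightarrow> 'c \<Rightarrow> 'c) \<Rightarrow> 'c
                     \<Rightarrow> ('b \<Rightarrow> 'c) \<Rightarrow> bool" where
  "bhom M j z N j' z' f \<longleftrightarrow>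
     (\<forall>x\<in>M. f x \<in> N) \<and> f z = z' \<and> (\<forall>x\<in>M. \<forall>y\<in>M. f (j x y) = j' (f x) (f y))"

text \<open>Projectivity, tested against all \<open>\<bool>\<close>-modules whose carrier lives in the type \<open>'b\<close>:
  every surjective homomorphism onto \<open>P\<close> has a (homomorphic) section.\<close>
definition bprojective_in :: "'b itself \<Rightarrow> 'p set \<Rightarrow> ('p \<Rightarrow> 'p \<Rightarrow> 'p) \<Rightarrow> 'p \<Rightarrow> bool" where
  "bprojective_in _ P jp zp \<longleftrightarrow>
     (\<forall>(M::'b set) j z f. bmodule M j z \<and> bhom M j z P jp zp f \<and> f ` M = P \<longrightarrow>
        (\<exists>g. bhom P jp zp M j z g \<and> (\<forall>x\<in>P. f (g x) = x)))"

definition down_closure :: "'a::order set \<Rightarrow> 'a set" where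
  "down_closure F = {y. \<exists>x\<in>F. y \<le> x}"

definition Bfree :: "'a::order set set" where
  "Bfree = {X. \<exists>F. finite F \<and> X = down_closure F}"

definition lower_finite :: "'a set \<Rightarrow> ('a \<Rightarrow> 'a \<Rightarrow> bool) \<Rightarrow> bool" where
  "lower_finite A r \<longleftrightarrow> (\<forall>x\<in>A. finite {y\<in>A. r y x})"

end

theory Submission
  imports Defs
begin

lemma dc_single: "down_closure {x} = {y. y \<le> (x::'a::order)}"
  by (auto simp: down_closure_def)

lemma dc_single_Bfree: "down_closure {x::'a::order} \<in> Bfree"
  unfolding Bfree_def by blast

lemma dc_union: "down_closure (A \<union> B) = down_closure A \<union> down_closure (B::'a::order set)"
  by (auto simp: down_closure_def)

lemma dc_empty: "down_closure {} = ({}::'a::order set)"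
  by (auto simp: down_closure_def)

lemma part1a:
  assumes "lower_finite (Bfree :: 'a::order set set) (\<subseteq>)"
  shows "lower_finite (UNIV :: 'a set) (\<le>)"
  unfolding lower_finite_def
proof
  fix x :: 'a
  have fin: "finite {A\<in>Bfree. A \<subseteq> down_closure {x}}"
    using assms dc_single_Bfree unfolding lower_finite_def by blast
  have "(\<lambda>y. down_closure {y}) ` {y. y \<le> x} \<subseteq> {A\<in>Bfree. A \<subseteq> down_closure {x}}"
    using dc_single_Bfree by (auto simp: dc_single)
  hence "finite ((\<lambda>y. down_closure {y}) ` {y. y \<le> x})" using fin finite_subset by blast
  moreover have "inj_on (\<lambda>y. down_closure {y}) {y. y \<le> x}"
    by (auto simp: inj_on_def dc_single intro: order.antisym)
  ultimately show "finite {y \<in> UNIV. y \<le> x}" using finite_imageD by auto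
qed

lemma Bfree_finite:
  fixes X :: "'a::order set"
  assumes "lower_finite (UNIV :: 'a set) (\<le>)" and "X \<in> Bfree"
  shows "finite X"
proof -
  obtain F where F: "finite F" "X = down_closure F" using assms(2) unfolding Bfree_def by blast
  have "X = (\<Union>x\<in>F. {y. y \<le> x})" using F by (auto simp: down_closure_def)
  moreover have "finite {y. y \<le> x}" for x :: 'a using assms(1) unfolding lower_finite_def by simp
  ultimately show ?thesis using F(1) by auto
qed

lemma part1b:
  assumes "lower_finite (UNIV :: 'a::order set) (\<le>)"
  shows "lower_finite (Bfree :: 'a::order set set) (\<subseteq>)"
  unfolding lower_finite_def
proof
  fix X :: "'a set" assume "X \<in> Bfree"
  hence "finite X" using Bfree_finite assms by blast
  hence "finite (Pow X)" by simp
  thus "finite {A\<in>Bfree. A \<subseteq> X}" by (rule finite_subset[rotated]) auto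
qed

lemma part3:
  assumes "bprojective_in TYPE('a set set) (Bfree :: 'a::order set set) (\<union>) {}"
  shows "lower_finite (UNIV :: 'a set) (\<le>)"
proof -
  define M :: "'a set set set" where "M = {F. finite F \<and> F \<subseteq> range (\<lambda>x. {x})}"
  define f :: "'a set set \<Rightarrow> 'a set" where "f F = down_closure (\<Union>F)" for F
  have mod: "bmodule M (\<union>) {}" unfolding bmodule_def M_def by auto
  have finU: "finite (\<Union>F)" if "F \<in> M" for F using that unfolding M_def by auto
  have hom: "bhom M (\<union>) {} Bfree (\<union>) {} f"
    unfolding bhom_def f_def Bfree_def using finU by (auto simp: dc_union dc_empty)
  have sur: "f ` M = Bfree"
  proof
    show "f ` M \<subseteq> Bfree" using hom unfolding bhom_def by auto
    show "Bfree \<subseteq> f ` M"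
    proof
      fix X :: "'a set" assume "X \<in> Bfree"
      then obtain F where F: "finite F" "X = down_closure F" unfolding Bfree_def by blast
      have "(\<lambda>x. {x}) ` F \<in> M" using F unfolding M_def by auto
      moreover have "f ((\<lambda>x. {x}) ` F) = X" using F unfolding f_def by simp
      ultimately show "X \<in> f ` M" by blast
    qed
  qed
  obtain g where g: "bhom Bfree (\<union>) {} M (\<union>) {} g" "\<forall>X\<in>Bfree. f (g X) = X"
    using assms mod hom sur unfolding bprojective_in_def by blast
  show ?thesis unfolding lower_finite_def
  proof
    fix x :: 'a
    have mono: "g (down_closure {y}) \<subseteq> g (down_closure {x})" if "y \<le> x" for y
    proof -
      have "down_closure {y} \<union> down_closure {x} = down_closure {x}"
        using that by (auto simp: dc_single)
      hence "g (down_closure {x}) = g (down_closure {y}) \<union> g (down_closure {x})"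
        using g(1) dc_single_Bfree unfolding bhom_def by metis
      thus ?thesis by blast
    qed
    have self: "y \<in> \<Union>(g (down_closure {y}))" for y
    proof -
      have "f (g (down_closure {y})) = down_closure {y}" using g(2) dc_single_Bfree by blast
      hence "y \<in> down_closure (\<Union>(g (down_closure {y})))" unfolding f_def by (simp add: dc_single)
      then obtain w where w: "w \<in> \<Union>(g (down_closure {y}))" "y \<le> w"
        unfolding down_closure_def by blast
      hence "w \<in> down_closure (\<Union>(g (down_closure {y})))" unfolding down_closure_def by blast
      hence "w \<le> y" using \<open>f (g (down_closure {y})) = down_closure {y}\<close>
        unfolding f_def by (simp add: dc_single)
      thus ?thesis using w by (metis order.antisym)
    qed
    have "{y \<in> UNIV. y \<le> x} \<subseteq> \<Union>(g (down_closure {x}))" using mono self by blast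
    moreover have "g (down_closure {x}) \<in> M" using g(1) dc_single_Bfree unfolding bhom_def by blast
    ultimately show "finite {y \<in> UNIV. y \<le> x}" using finU finite_subset by blast
  qed
qed


lemma jle:
  assumes "bmodule M j z" "a \<in> M" "b \<in> M" "u \<in> M"
  shows "j (j b a) u = u \<longleftrightarrow> j b u = u \<and> j a u = u"
proof -
  have as: "\<And>x y w. x\<in>M \<Longrightarrow> y\<in>M \<Longrightarrow> w\<in>M \<Longrightarrow> j (j x y) w = j x (j y w)"
   and cm: "\<And>x y. x\<in>M \<Longrightarrow> y\<in>M \<Longrightarrow> j x y = j y x"
   and id: "\<And>x. x\<in>M \<Longrightarrow> j x x = x"
   and cl: "\<And>x y. x\<in>M \<Longrightarrow> y\<in>M \<Longrightarrow> j x y \<in> M"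
    using assms(1) unfolding bmodule_def by auto
  show ?thesis
  proof
    assume h: "j (j b a) u = u"
    have "j b u = j b (j (j b a) u)" using h by simp
    also have "\<dots> = j (j b (j b a)) u" using as assms cl by simp
    also have "j b (j b a) = j b a" using as[of b b a] id assms by simp
    finally have 1: "j b u = u" using h by simp
    have "j a u = j a (j (j b a) u)" using h by simp
    also have "\<dots> = j (j a (j b a)) u" using as assms cl by simp
    also have "j a (j b a) = j b a"
      using as[of a a b] id[of a] cm[of a b] assms by simp
    finally have 2: "j a u = u" using h by simp
    show "j b u = u \<and> j a u = u" using 1 2 by simp
  next
    assume "j b u = u \<and> j a u = u"
    thus "j (j b a) u = u" using as assms by simp
  qed
qed

lemma juniq:
  assumes "bmodule M j z" "a \<in> M" "b \<in> M" "\<forall>u\<in>M. j a u = u \<longleftrightarrow> j b u = u"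
  shows "a = b"
proof -
  have cm: "\<And>x y. x\<in>M \<Longrightarrow> y\<in>M \<Longrightarrow> j x y = j y x"
   and id: "\<And>x. x\<in>M \<Longrightarrow> j x x = x"
    using assms(1) unfolding bmodule_def by auto
  have "j b a = a" using assms id by blast
  moreover have "j a b = b" using assms id by blast
  ultimately show ?thesis using cm assms by metis
qed

lemma part2:
  assumes "lower_finite (UNIV :: 'a::order set) (\<le>)"
  shows "bprojective_in TYPE('b) (Bfree :: 'a set set) (\<union>) {}"
  unfolding bprojective_in_def
proof (intro allI impI)
  fix M :: "'b set" and j z and f :: "'b \<Rightarrow> 'a set"
  assume A: "bmodule M j z \<and> bhom M j z Bfree (\<union>) {} f \<and> f ` M = Bfree"
  hence mod: "bmodule M j z" and hom: "bhom M j z Bfree (\<union>) {} f" and sur: "f ` M = Bfree" by auto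
  have zM: "z \<in> M" and cl: "\<And>x y. x\<in>M \<Longrightarrow> y\<in>M \<Longrightarrow> j x y \<in> M"
    and zl: "\<And>x. x\<in>M \<Longrightarrow> j z x = x"
    using mod unfolding bmodule_def by auto
  have fz: "f z = {}" and fj: "\<And>x y. x\<in>M \<Longrightarrow> y\<in>M \<Longrightarrow> f (j x y) = f x \<union> f y"
    using hom unfolding bhom_def by auto
  have "\<forall>y. \<exists>a. a \<in> M \<and> f a = down_closure {y}"
    using sur dc_single_Bfree by (metis imageE)
  then obtain m :: "'a \<Rightarrow> 'b" where m: "\<And>y. m y \<in> M" "\<And>y. f (m y) = down_closure {y}" by metis
  define ch where "ch a X \<longleftrightarrow> (\<forall>u\<in>M. j a u = u \<longleftrightarrow> (\<forall>y\<in>X. j (m y) u = u))" for a and X :: "'a set"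
  have ex: "\<exists>a\<in>M. ch a X \<and> f a = (\<Union>y\<in>X. down_closure {y})" if "finite X" for X
    using that
  proof (induction X rule: finite_induct)
    case empty
    show ?case using zM zl fz unfolding ch_def by (intro bexI[of _ z]) auto
  next
    case (insert y X)
    then obtain a where a: "a \<in> M" "ch a X" "f a = (\<Union>y\<in>X. down_closure {y})" by blast
    have "ch (j (m y) a) (insert y X)"
      unfolding ch_def using a(2) jle[OF mod a(1) m(1)] unfolding ch_def by auto
    moreover have "f (j (m y) a) = (\<Union>y\<in>insert y X. down_closure {y})"
      using fj[OF m(1) a(1)] m(2) a(3) by auto
    ultimately show ?case using cl[OF m(1) a(1)] by blast
  qed
  have un: "a = b" if "a \<in> M" "b \<in> M" "ch a X" "ch b X" for a b X
    using juniq[OF mod that(1,2)] that(3,4) unfolding ch_def by blast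
  define g where "g X = (THE a. a \<in> M \<and> ch a X)" for X :: "'a set"
  have gI: "g X = a" if "finite X" "a \<in> M" "ch a X" for X a
    unfolding g_def using un that by (intro the_equality) auto
  have gM: "g X \<in> M \<and> ch (g X) X \<and> f (g X) = (\<Union>y\<in>X. down_closure {y})" if "finite X" for X
    using ex[OF that] gI[OF that] by auto
  have fin: "finite X" if "X \<in> Bfree" for X :: "'a set" using Bfree_finite assms that by blast
  have dcl: "(\<Union>y\<in>X. down_closure {y}) = X" if XB: "X \<in> Bfree" for X :: "'a set"
  proof -
    obtain F where "X = down_closure F" using XB unfolding Bfree_def by blast
    thus ?thesis by (auto simp: down_closure_def intro: order.trans)
  qed
  have "bhom Bfree (\<union>) {} M j z g"
    unfolding bhom_def
  proof (intro conjI ballI)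
    show "g X \<in> M" if XB: "X \<in> Bfree" for X :: "'a set" using gM[OF fin[OF XB]] by simp
    show "g {} = z" using gI[of "{}" z] zM zl unfolding ch_def by auto
    fix X Y :: "'a set" assume XY: "X \<in> Bfree" "Y \<in> Bfree"
    have a: "g X \<in> M" "ch (g X) X" "g Y \<in> M" "ch (g Y) Y" using gM[OF fin[OF XY(1)]] gM[OF fin[OF XY(2)]] by auto
    have "ch (j (g X) (g Y)) (X \<union> Y)"
      unfolding ch_def using jle[OF mod a(3) a(1)] a(2,4) unfolding ch_def by auto
    moreover have "finite (X \<union> Y)" using fin XY by blast
    ultimately show "g (X \<union> Y) = j (g X) (g Y)" using gI cl[OF a(1) a(3)] by blast
  qed
  moreover have "\<forall>X\<in>Bfree. f (g X) = X"
  proof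
    fix X :: "'a set" assume XB: "X \<in> Bfree"
    show "f (g X) = X" using gM[OF fin[OF XB]] dcl[OF XB] by simp
  qed
  ultimately show "\<exists>g. bhom Bfree (\<union>) {} M j z g \<and> (\<forall>x\<in>Bfree. f (g x) = x)" by blast
qed

theorem mainTheorem9:
  shows "(lower_finite (Bfree :: 'a::order set set) (\<subseteq>) \<longleftrightarrow> lower_finite (UNIV :: 'a set) (\<le>))
       \<and> (lower_finite (UNIV :: 'a set) (\<le>) \<longrightarrow>
            bprojective_in TYPE('b) (Bfree :: 'a set set) (\<union>) {})
       \<and> (bprojective_in TYPE('a set set) (Bfree :: 'a set set) (\<union>) {} \<longrightarrow>
            lower_finite (UNIV :: 'a set) (\<le>))"
  using part1a part1b part2 part3 by blast

end
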